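(* Let $(M,d)$ be a compact metric space, $\varphi:M\to M$ continuous, and $\{G_n\}\subset B(M)$ such that there exists $\{G^{(k)}\}\subset B(M)$ with $\lim_{k\to\infty}\limsup_{n\to\infty}n^{-1}\|G_n-S_nG^{(k)}\|_\infty=0$. Then $\lim_{k\to\infty}\limsup_{n\to\infty}n^{-1}\|G_n-k^{-1}S_nG_k\|_\infty=0$.
   Context: $B(M)$: bounded Borel real functions, $\|f\|_\infty=\sup|f|$; $S_nG=\sum_{k=0}^{n-1}G\circ\varphi^k$. *)

theory Defs
  imports "HOL-Analysis.Analysis"
begin

definition bounded_borel :: "('a::metric_space \<Rightarrow> real) \<Rightarrow> bool" where
  "bounded_borel f \<longleftrightarrow> f \<in> borel_measurable borel \<and> bounded (range f)"

definition sup_norm :: "('a \<Rightarrow> real) \<Rightarrow> real" where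
  "sup_norm f = (SUP x. \<bar>f x\<bar>)"

definition birkhoff_sum :: "('a \<Rightarrow> 'a) \<Rightarrow> nat \<Rightarrow> ('a \<Rightarrow> real) \<Rightarrow> 'a \<Rightarrow> real" where
  "birkhoff_sum \<phi> n g x = (\<Sum>k<n. g ((\<phi> ^^ k) x))"

end

theory Submission
  imports Defs
begin


lemma sup_norm_ub:
  fixes f :: "'a \<Rightarrow> real"
  assumes "\<And>y. \<bar>f y\<bar> \<le> C"
  shows "\<bar>f x\<bar> \<le> sup_norm f"
  unfolding sup_norm_def
  by (rule cSUP_upper) (use assms in \<open>auto intro!: bdd_aboveI2\<close>)

lemma sup_norm_le:
  fixes f :: "'a \<Rightarrow> real"
  assumes "\<And>y. \<bar>f y\<bar> \<le> C"
  shows "sup_norm f \<le> C"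
  unfolding sup_norm_def
  by (rule cSUP_least) (use assms in auto)

lemma sup_norm_nonneg: "0 \<le> sup_norm (f :: 'a \<Rightarrow> real)" if "\<And>y. \<bar>f y\<bar> \<le> C" for C
  using sup_norm_ub[of f C undefined, OF that] by linarith

lemma sup_norm_nonneg': "\<forall>y. \<bar>f y\<bar> \<le> C \<Longrightarrow> 0 \<le> sup_norm (f :: 'a \<Rightarrow> real)"
  using sup_norm_nonneg[of f C] by blast

lemma sup_norm_ub': "\<forall>y. \<bar>f y\<bar> \<le> C \<Longrightarrow> \<bar>f x\<bar> \<le> sup_norm (f :: 'a \<Rightarrow> real)"
  using sup_norm_ub[of f C] by blast

lemma sup_norm_ub'': "\<exists>C. \<forall>y. \<bar>f y\<bar> \<le> C \<Longrightarrow> \<bar>f x\<bar> \<le> sup_norm (f :: 'a \<Rightarrow> real)"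
  using sup_norm_ub[of f] by blast

lemma bb_bound: "bounded_borel f \<Longrightarrow> \<exists>B. \<forall>y. \<bar>f y\<bar> \<le> B"
  unfolding bounded_borel_def bounded_iff by auto

lemma shift_bound:
  fixes f :: "nat \<Rightarrow> real"
  assumes "\<And>y. \<bar>f y\<bar> \<le> B"
  shows "\<bar>(\<Sum>i<n. f (i+j)) - (\<Sum>i<n. f i)\<bar> \<le> 2 * real j * B"
proof (induction j)
  case 0 then show ?case by simp
next
  case (Suc j)
  have tel: "(\<Sum>i<n. f (i + Suc j)) - (\<Sum>i<n. f (i+j)) = f (n+j) - f j"
    using sum_lessThan_telescope[of "\<lambda>i. f (i+j)" n]
    by (simp add: sum_subtractf[symmetric] add.commute)
  have "\<bar>f (n+j) - f j\<bar> \<le> 2*B" using assms[of "n+j"] assms[of j] by linarith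
  moreover have "(\<Sum>i<n. f (i + Suc j)) - (\<Sum>i<n. f i) = ((\<Sum>i<n. f (i+j)) - (\<Sum>i<n. f i)) + (f (n+j) - f j)"
    using tel by simp
  ultimately have "\<bar>(\<Sum>i<n. f (i + Suc j)) - (\<Sum>i<n. f i)\<bar> \<le> 2 * real j * B + 2 * B"
    using Suc.IH by linarith
  then show ?case by (simp add: algebra_simps)
qed

lemma birk_bound:
  assumes "\<And>y. \<bar>H y\<bar> \<le> B"
  shows "\<bar>birkhoff_sum \<phi> n (birkhoff_sum \<phi> k H) x - real k * birkhoff_sum \<phi> n H x\<bar>
          \<le> 2 * real k * real k * B"
proof -
  have e1: "birkhoff_sum \<phi> n (birkhoff_sum \<phi> k H) x = (\<Sum>j<k. \<Sum>i<n. H ((\<phi>^^(i+j)) x))"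
    unfolding birkhoff_sum_def by (subst sum.swap) (simp add: funpow_add add.commute)
  have e2: "real k * birkhoff_sum \<phi> n H x = (\<Sum>j<k. \<Sum>i<n. H ((\<phi>^^i) x))"
    unfolding birkhoff_sum_def by simp
  have "\<bar>(\<Sum>j<k. \<Sum>i<n. H ((\<phi>^^(i+j)) x)) - (\<Sum>j<k. \<Sum>i<n. H ((\<phi>^^i) x))\<bar>
      = \<bar>\<Sum>j<k. ((\<Sum>i<n. H ((\<phi>^^(i+j)) x)) - (\<Sum>i<n. H ((\<phi>^^i) x)))\<bar>"
    by (simp add: sum_subtractf)
  also have "\<dots> \<le> (\<Sum>j<k. \<bar>(\<Sum>i<n. H ((\<phi>^^(i+j)) x)) - (\<Sum>i<n. H ((\<phi>^^i) x))\<bar>)"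
    by (rule sum_abs)
  also have "\<dots> \<le> (\<Sum>j<k. 2 * real k * B)"
  proof (rule sum_mono)
    fix j assume "j \<in> {..<k}"
    have B0: "0 \<le> B" using assms[of undefined] by linarith
    have "\<bar>(\<Sum>i<n. H ((\<phi>^^(i+j)) x)) - (\<Sum>i<n. H ((\<phi>^^i) x))\<bar> \<le> 2 * real j * B"
      using shift_bound[where f="\<lambda>i. H ((\<phi>^^i) x)" and B=B and n=n and j=j] assms by simp
    also have "\<dots> \<le> 2 * real k * B" using \<open>j \<in> {..<k}\<close> B0 by (simp add: mult_right_mono)
    finally show "\<bar>(\<Sum>i<n. H ((\<phi>^^(i+j)) x)) - (\<Sum>i<n. H ((\<phi>^^i) x))\<bar> \<le> 2 * real k * B" .
  qed
  also have "\<dots> = 2 * real k * real k * B" by simp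
  finally have fin: "\<bar>(\<Sum>j<k. \<Sum>i<n. H ((\<phi>^^(i+j)) x)) - (\<Sum>j<k. \<Sum>i<n. H ((\<phi>^^i) x))\<bar> \<le> 2 * real k * real k * B" .
  show ?thesis unfolding e1 e2 by (rule fin)
qed

lemma birk_abs:
  assumes "\<And>y. \<bar>f y\<bar> \<le> C"
  shows "\<bar>birkhoff_sum \<phi> n f x\<bar> \<le> real n * C"
proof -
  have "\<bar>birkhoff_sum \<phi> n f x\<bar> \<le> (\<Sum>i<n. \<bar>f ((\<phi>^^i) x)\<bar>)"
    unfolding birkhoff_sum_def by (rule sum_abs)
  also have "\<dots> \<le> (\<Sum>i<n. C)" by (rule sum_mono) (use assms in auto)
  finally show ?thesis by simp
qed


lemma birk_diff: "birkhoff_sum \<phi> n (\<lambda>y. f y - g y) x = birkhoff_sum \<phi> n f x - birkhoff_sum \<phi> n g x"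
  unfolding birkhoff_sum_def by (simp add: sum_subtractf)

lemma pointwise_key:
  fixes \<phi> :: "'a \<Rightarrow> 'a"
  assumes HB: "\<And>y. \<bar>H y\<bar> \<le> B"
    and dB: "\<And>y. \<bar>G k y - birkhoff_sum \<phi> k H y\<bar> \<le> d"
    and k: "k \<ge> 1"
  shows "\<bar>Gn x - birkhoff_sum \<phi> n (G k) x / real k\<bar>
     \<le> \<bar>Gn x - birkhoff_sum \<phi> n H x\<bar> + 2 * real k * B + real n * d / real k"
proof -
  have kp: "real k > 0" using k by simp
  have id: "Gn x - birkhoff_sum \<phi> n (G k) x / real k
     = (Gn x - birkhoff_sum \<phi> n H x)
       + (real k * birkhoff_sum \<phi> n H x - birkhoff_sum \<phi> n (birkhoff_sum \<phi> k H) x) / real k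
       + birkhoff_sum \<phi> n (\<lambda>y. birkhoff_sum \<phi> k H y - G k y) x / real k"
    using kp by (simp add: birk_diff field_simps)
  have t2: "\<bar>(real k * birkhoff_sum \<phi> n H x - birkhoff_sum \<phi> n (birkhoff_sum \<phi> k H) x) / real k\<bar>
      \<le> 2 * real k * B"
  proof -
    have "\<bar>real k * birkhoff_sum \<phi> n H x - birkhoff_sum \<phi> n (birkhoff_sum \<phi> k H) x\<bar>
        \<le> 2 * real k * real k * B"
      using birk_bound[where H=H and B=B and \<phi>=\<phi> and n=n and k=k and x=x, OF HB] by (simp add: abs_minus_commute)
    then show ?thesis using kp by (simp add: abs_divide pos_divide_le_eq mult_ac)
  qed
  have t3: "\<bar>birkhoff_sum \<phi> n (\<lambda>y. birkhoff_sum \<phi> k H y - G k y) x / real k\<bar> \<le> real n * d / real k"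
  proof -
    have "\<bar>birkhoff_sum \<phi> n (\<lambda>y. birkhoff_sum \<phi> k H y - G k y) x\<bar> \<le> real n * d"
      by (rule birk_abs) (use dB in \<open>simp add: abs_minus_commute\<close>)
    then show ?thesis using kp by (simp add: abs_divide divide_right_mono)
  qed
  show ?thesis unfolding id using t2 t3 by linarith
qed

theorem lemma6p3:
  fixes \<phi> :: "'a::metric_space \<Rightarrow> 'a"
    and G :: "nat \<Rightarrow> 'a \<Rightarrow> real"
  assumes "compact (UNIV :: 'a set)"
    and "continuous_on UNIV \<phi>"
    and "\<And>n. bounded_borel (G n)"
    and "\<exists>H :: nat \<Rightarrow> 'a \<Rightarrow> real. (\<forall>k. bounded_borel (H k)) \<and>
           ((\<lambda>k. limsup (\<lambda>n. ereal (sup_norm (\<lambda>x. G n x - birkhoff_sum \<phi> n (H k) x) / real n)))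
              \<longlonglongrightarrow> 0)"
  shows "(\<lambda>k. limsup (\<lambda>n. ereal (sup_norm (\<lambda>x. G n x - birkhoff_sum \<phi> n (G k) x / real k) / real n)))
           \<longlonglongrightarrow> 0"
proof -
  obtain H :: "nat \<Rightarrow> 'a \<Rightarrow> real" where Hb: "\<And>k. bounded_borel (H k)"
    and Hlim: "(\<lambda>k. limsup (\<lambda>n. ereal (sup_norm (\<lambda>x. G n x - birkhoff_sum \<phi> n (H k) x) / real n))) \<longlonglongrightarrow> 0"
    using assms(4) by blast
  define eps where "eps j = limsup (\<lambda>n. ereal (sup_norm (\<lambda>x. G n x - birkhoff_sum \<phi> n (H j) x) / real n))" for j
  define e where "e j k = ereal (sup_norm (\<lambda>x. G k x - birkhoff_sum \<phi> k (H j) x) / real k)" for j k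
  define L where "L k = limsup (\<lambda>n. ereal (sup_norm (\<lambda>x. G n x - birkhoff_sum \<phi> n (G k) x / real k) / real n))" for k
  have limse: "limsup (e j) = eps j" for j unfolding e_def eps_def by simp
  have bd1: "\<exists>C. \<forall>y. \<bar>G n y - birkhoff_sum \<phi> n f y\<bar> \<le> C" if fb: "bounded_borel f" for n f
  proof -
    obtain C1 where C1: "\<And>y. \<bar>G n y\<bar> \<le> C1" using bb_bound[OF assms(3)[of n]] by blast
    obtain C2 where C2: "\<And>y. \<bar>f y\<bar> \<le> C2" using bb_bound[OF fb] by blast
    have "\<bar>G n y - birkhoff_sum \<phi> n f y\<bar> \<le> C1 + real n * C2" for y
      using C1[of y] birk_abs[where f=f and C=C2 and \<phi>=\<phi> and n=n and x=y, OF C2] by linarith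
    then show ?thesis by blast
  qed
  have bd2: "\<exists>C. \<forall>y. \<bar>G n y - birkhoff_sum \<phi> n (G k) y / real k\<bar> \<le> C" for n k
  proof -
    obtain C1 where C1: "\<And>y. \<bar>G n y\<bar> \<le> C1" using bb_bound[OF assms(3)[of n]] by blast
    obtain C2 where C2: "\<And>y. \<bar>G k y\<bar> \<le> C2" using bb_bound[OF assms(3)[of k]] by blast
    have bk: "\<bar>birkhoff_sum \<phi> n (G k) y / real k\<bar> \<le> \<bar>real n * C2\<bar>" for y
    proof (cases "k = 0")
      case False
      then have "\<bar>birkhoff_sum \<phi> n (G k) y\<bar> / real k \<le> \<bar>birkhoff_sum \<phi> n (G k) y\<bar>"
      proof -
        have k1: "real k \<ge> 1" using False by simp
        have "\<bar>birkhoff_sum \<phi> n (G k) y\<bar> \<le> \<bar>birkhoff_sum \<phi> n (G k) y\<bar> * real k"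
          using mult_left_mono[OF k1, of "\<bar>birkhoff_sum \<phi> n (G k) y\<bar>"] by simp
        then show ?thesis using k1 by (simp add: pos_divide_le_eq)
      qed
      then show ?thesis using birk_abs[where f="G k" and C=C2 and \<phi>=\<phi> and n=n and x=y, OF C2] by (simp add: abs_divide)
    qed simp
    have "\<bar>G n y - birkhoff_sum \<phi> n (G k) y / real k\<bar> \<le> C1 + \<bar>real n * C2\<bar>" for y
      using C1[of y] bk[of y] by linarith
    then show ?thesis by blast
  qed
  have Lnn: "0 \<le> L k" for k
    unfolding L_def
  proof (rule le_Limsup)
    show "\<forall>\<^sub>F n in sequentially. 0 \<le> ereal (sup_norm (\<lambda>x. G n x - birkhoff_sum \<phi> n (G k) x / real k) / real n)"
    proof (rule always_eventually, intro allI)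
      fix n
      obtain C where "\<forall>y. \<bar>G n y - birkhoff_sum \<phi> n (G k) y / real k\<bar> \<le> C" using bd2 by blast
      then have "0 \<le> sup_norm (\<lambda>x. G n x - birkhoff_sum \<phi> n (G k) x / real k)"
        by (rule sup_norm_nonneg')
      then show "0 \<le> ereal (sup_norm (\<lambda>x. G n x - birkhoff_sum \<phi> n (G k) x / real k) / real n)" by simp
    qed
  qed simp
  have claim1: "L k \<le> eps j + e j k" if k: "k \<ge> 1" for j k
  proof -
    obtain B where HB: "\<And>y. \<bar>H j y\<bar> \<le> B" using bb_bound[OF Hb[of j]] by blast
    define d where "d = sup_norm (\<lambda>x. G k x - birkhoff_sum \<phi> k (H j) x)"
    have dB: "\<bar>G k y - birkhoff_sum \<phi> k (H j) y\<bar> \<le> d" for y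
      unfolding d_def using bd1[OF Hb[of j], of k] by (rule sup_norm_ub'')
    have ineq: "ereal (sup_norm (\<lambda>x. G n x - birkhoff_sum \<phi> n (G k) x / real k) / real n)
       \<le> ereal (sup_norm (\<lambda>x. G n x - birkhoff_sum \<phi> n (H j) x) / real n)
         + ereal (2 * real k * B / real n + d / real k)" if n: "n \<ge> 1" for n
    proof -
      have "sup_norm (\<lambda>x. G n x - birkhoff_sum \<phi> n (G k) x / real k)
          \<le> sup_norm (\<lambda>x. G n x - birkhoff_sum \<phi> n (H j) x) + 2 * real k * B + real n * d / real k"
      proof (rule sup_norm_le)
        fix y
        obtain C where "\<forall>y. \<bar>G n y - birkhoff_sum \<phi> n (H j) y\<bar> \<le> C" using bd1[OF Hb[of j]] by blast
        then have "\<bar>G n y - birkhoff_sum \<phi> n (H j) y\<bar> \<le> sup_norm (\<lambda>x. G n x - birkhoff_sum \<phi> n (H j) x)"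
          by (rule sup_norm_ub')
        then show "\<bar>G n y - birkhoff_sum \<phi> n (G k) y / real k\<bar>
          \<le> sup_norm (\<lambda>x. G n x - birkhoff_sum \<phi> n (H j) x) + 2 * real k * B + real n * d / real k"
          using pointwise_key[where H="H j" and B=B and G=G and k=k and d=d and Gn="G n" and x=y and n=n and \<phi>=\<phi>, OF HB dB k]
          by linarith
      qed
      then have "sup_norm (\<lambda>x. G n x - birkhoff_sum \<phi> n (G k) x / real k) / real n
          \<le> (sup_norm (\<lambda>x. G n x - birkhoff_sum \<phi> n (H j) x) + 2 * real k * B + real n * d / real k) / real n"
        by (simp add: divide_right_mono)
      also have "\<dots> = sup_norm (\<lambda>x. G n x - birkhoff_sum \<phi> n (H j) x) / real n + (2 * real k * B / real n + d / real k)"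
        using n by (simp add: field_simps)
      finally show ?thesis by simp
    qed
    have "L k \<le> limsup (\<lambda>n. ereal (sup_norm (\<lambda>x. G n x - birkhoff_sum \<phi> n (H j) x) / real n)
         + ereal (2 * real k * B / real n + d / real k))"
      unfolding L_def
      by (rule Limsup_mono) (use ineq in \<open>auto simp: eventually_sequentially\<close>)
    also have "\<dots> \<le> eps j + limsup (\<lambda>n. ereal (2 * real k * B / real n + d / real k))"
      unfolding eps_def by (rule ereal_limsup_add_mono)
    also have "limsup (\<lambda>n. ereal (2 * real k * B / real n + d / real k)) = ereal (d / real k)"
    proof (rule lim_imp_Limsup)
      have "(\<lambda>n. 2 * real k * B / real n + d / real k) \<longlonglongrightarrow> 0 + d / real k"
        by (intro tendsto_intros)
      then show "(\<lambda>n. ereal (2 * real k * B / real n + d / real k)) \<longlonglongrightarrow> ereal (d / real k)"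
        by (simp add: tendsto_ereal)
    qed simp
    also have "ereal (d / real k) = e j k" unfolding e_def d_def by simp
    finally show ?thesis .
  qed
  have epsnn: "0 \<le> eps j" for j
    unfolding eps_def
  proof (rule le_Limsup)
    show "\<forall>\<^sub>F n in sequentially. 0 \<le> ereal (sup_norm (\<lambda>x. G n x - birkhoff_sum \<phi> n (H j) x) / real n)"
    proof (rule always_eventually, intro allI)
      fix n
      obtain C where "\<forall>y. \<bar>G n y - birkhoff_sum \<phi> n (H j) y\<bar> \<le> C" using bd1[OF Hb[of j]] by blast
      then have "0 \<le> sup_norm (\<lambda>x. G n x - birkhoff_sum \<phi> n (H j) x)"
        by (rule sup_norm_nonneg')
      then show "0 \<le> ereal (sup_norm (\<lambda>x. G n x - birkhoff_sum \<phi> n (H j) x) / real n)" by simp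
    qed
  qed simp
  have claim3: "limsup L \<le> eps j + eps j" for j
  proof -
    have "limsup L \<le> limsup (\<lambda>k. eps j + e j k)"
      by (rule Limsup_mono) (use claim1 in \<open>auto simp: eventually_sequentially\<close>)
    also have "\<dots> \<le> limsup (\<lambda>k. eps j) + limsup (e j)"
      by (rule ereal_limsup_add_mono)
    also have "\<dots> = eps j + eps j" by (simp add: limse Limsup_const)
    finally show ?thesis .
  qed
  have lim2: "(\<lambda>j. eps j + eps j) \<longlonglongrightarrow> 0 + 0"
    by (rule tendsto_add_ereal) (use Hlim in \<open>auto simp: eps_def\<close>)
  have sup0: "limsup L \<le> 0"
  proof -
    have "limsup L \<le> 0 + 0"
      by (rule tendsto_le[OF sequentially_bot lim2 tendsto_const]) (simp add: claim3)
    then show ?thesis by simp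
  qed
  have inf0: "0 \<le> liminf L"
    by (rule Liminf_bounded) (use Lnn in auto)
  have "liminf L \<le> limsup L" by (rule Liminf_le_Limsup) simp
  then have "liminf L = 0" "limsup L = 0" using sup0 inf0 by auto
  then have "L \<longlonglongrightarrow> 0" by (intro Liminf_eq_Limsup) auto
  then show ?thesis unfolding L_def .
qed

end
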